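(* Let $n\ge1$, $k\ge1$, $\mathcal{D}=\{0,\ldots,n\}$, and let $i\in\{0,\ldots,n\}$. Let $\mathbf{c}=\mathbf{W}_i0^{k-1}$ (the word $\mathbf{W}_i$ followed by $k-1$ zeros). Then for every $\mathbf{w}\in\mathcal{D}^k$, $$\#\{1\le j\le k\cdot(n+1)^k:\ c_j\cdots c_{j+k-1}=\mathbf{w}\}=k.$$
   Context: Let $\mathbf{w}_0,\mathbf{w}_1,\ldots,\mathbf{w}_{(n+1)^k-1}$ be the elements of $\mathcal{D}^k$ listed in strictly increasing lexicographic order (so $\mathbf{w}_0=0^k$, $\mathbf{w}_1=0^{k-1}1$, \ldots, $\mathbf{w}_{(n+1)^k-1}=n^k$). For $i=0,\ldots,n$ define the word (concatenation) $\mathbf{W}_i=\mathbf{w}_i\mathbf{w}_{i+1}\cdots\mathbf{w}_{(n+1)^k-1}\mathbf{w}_0\mathbf{w}_1\cdots\mathbf{w}_{i-1}$, a word of length $k\cdot(n+1)^k$ (with $\mathbf{W}_0=\mathbf{w}_0\mathbf{w}_1\cdots\mathbf{w}_{(n+1)^k-1}$). *)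

theory Defs
  imports Main "HOL-Library.List_Lexorder"
begin

text \<open>The alphabet D = {0..n}; words are lists. The list ordering from
List_Lexorder is the lexicographic order (on words of equal length k it is
the usual lexicographic order).\<close>

definition lex_words :: "nat \<Rightarrow> nat \<Rightarrow> nat list list" where
  "lex_words n k = sorted_list_of_set {xs. length xs = k \<and> set xs \<subseteq> {0..n}}"

definition bigW :: "nat \<Rightarrow> nat \<Rightarrow> nat \<Rightarrow> nat list" where
  "bigW n k i = concat (drop i (lex_words n k) @ take i (lex_words n k))"

end

theory Submission
  imports Defs
begin
fun dig :: "nat \<Rightarrow> nat \<Rightarrow> nat \<Rightarrow> nat list" where
  "dig N 0 m = []" | "dig N (Suc j) m = dig N j (m div N) @ [m mod N]"

lemma dig_length[simp]: "length (dig N j m) = j"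
  by (induction j arbitrary: m) auto

lemma dig_set: "N > 0 \<Longrightarrow> set (dig N j m) \<subseteq> {0..<N}"
  by (induction j arbitrary: m) auto

lemma dig_split: "N > 0 \<Longrightarrow> dig N (a + b) m = dig N a (m div N ^ b) @ dig N b m"
proof (induction b arbitrary: m)
  case 0 then show ?case by simp
next
  case (Suc b)
  have "dig N (a + Suc b) m = dig N (a+b) (m div N) @ [m mod N]" by simp
  also have "\<dots> = dig N a (m div N div N^b) @ dig N b (m div N) @ [m mod N]" using Suc by simp
  also have "m div N div N^b = m div N^(Suc b)" by (simp add: div_mult2_eq)
  finally show ?case by simp
qed

lemma dig_Suc2: "N > 0 \<Longrightarrow> dig N (Suc j) m = (m div N^j mod N) # dig N j m"
  using dig_split[of N 1 j m] by simp

lemma dig_eq_iff: "N > 0 \<Longrightarrow> dig N j m = dig N j m' \<longleftrightarrow> m mod N^j = m' mod N^j"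
proof (induction j arbitrary: m m')
  case 0 then show ?case by simp
next
  case (Suc j)
  have e: "x mod N^Suc j = N * (x div N mod N^j) + x mod N" for x
    by (metis mod_mult2_eq power_Suc)
  show ?case
  proof
    assume "dig N (Suc j) m = dig N (Suc j) m'"
    then have "dig N j (m div N) = dig N j (m' div N)" "m mod N = m' mod N" by auto
    then show "m mod N^Suc j = m' mod N^Suc j" using Suc e by metis
  next
    assume h: "m mod N^Suc j = m' mod N^Suc j"
    have "m mod N = m' mod N"
      by (metis h mod_mod_cancel dvd_power Suc.prems zero_less_Suc)
    moreover then have "m div N mod N^j = m' div N mod N^j" using h e Suc.prems by (metis add_right_cancel mult_cancel_left gr_implies_not0)
    ultimately show "dig N (Suc j) m = dig N (Suc j) m'" using Suc by simp
  qed
qed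

lemma dig_mod: "N > 0 \<Longrightarrow> dig N j (m mod N^j) = dig N j m"
  by (simp add: dig_eq_iff)

lemma dig_zero: "dig N j 0 = replicate j 0"
  by (induction j) (auto simp: replicate_append_same)

lemma dig_less: "N > 0 \<Longrightarrow> m < m' \<Longrightarrow> m' < N^j \<Longrightarrow> dig N j m < dig N j m'"
proof (induction j arbitrary: m m')
  case 0 then show ?case by simp
next
  case (Suc j)
  have hd: "x div N^j < N" if "x < N^Suc j" for x
    using that by (simp add: less_mult_imp_div_less)
  have le: "m div N^j \<le> m' div N^j" using Suc.prems by (simp add: div_le_mono)
  show ?case
  proof (cases "m div N^j = m' div N^j")
    case True
    then have "m mod N^j < m' mod N^j" using Suc.prems
      by (metis add_less_cancel_left div_mult_mod_eq)
    then have "dig N j (m mod N^j) < dig N j (m' mod N^j)" using Suc by simp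
    then show ?thesis using True Suc.prems by (simp add: dig_Suc2 dig_mod del: dig.simps(2))
  next
    case False
    then show ?thesis using le hd Suc.prems by (simp add: dig_Suc2 del: dig.simps(2))
  qed
qed

lemma dig_small: "N > 0 \<Longrightarrow> i < N \<Longrightarrow> dig N (Suc j) i = replicate j 0 @ [i]"
  by (simp add: dig_zero)

lemma lex_words_eq:
  assumes "N = n + 1"
  shows "lex_words n k = map (dig N k) [0..<N^k]"
proof -
  let ?A = "{xs. length xs = k \<and> set xs \<subseteq> {0..n}}"
  have fin: "finite ?A" using finite_lists_length_eq[of "{0..n}" k] by (simp add: conj_commute)
  have cA: "card ?A = N^k" using card_lists_length_eq[of "{0..n}" k] assms by (simp add: conj_commute)
  let ?l = "map (dig N k) [0..<N^k]"
  have sw: "sorted_wrt (<) ?l"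
    unfolding sorted_wrt_map using assms by (auto simp: sorted_wrt_iff_nth_less intro!: dig_less)
  have dl: "distinct ?l" using sw strict_sorted_iff by blast
  have sub: "set ?l \<subseteq> ?A" using dig_set[of N k] assms by fastforce
  have cl: "card (set ?l) = N^k" using distinct_card[OF dl] by simp
  have sA: "set ?l = ?A"
    using sub cl cA by (intro card_subset_eq fin) auto
  have "length ?l = card ?A" using cA by simp
  then show ?thesis unfolding lex_words_def
    using sorted_list_of_set_unique[OF fin, of ?l] sw sA by simp
qed

lemma window:
  assumes "\<forall>x\<in>set bs. length x = k" "q < length bs" "r < k" "r \<le> length z"
  shows "take k (drop (q*k+r) (concat bs @ z)) =
         drop r (bs!q) @ take r (if Suc q < length bs then bs!Suc q else z)"
  using assms
proof (induction bs arbitrary: q)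
  case Nil then show ?case by simp
next
  case (Cons b bs)
  show ?case
  proof (cases q)
    case 0
    have lb: "length b = k" using Cons.prems by simp
    have "take k (drop r (b @ concat bs @ z)) = drop r b @ take r (concat bs @ z)"
      using lb Cons.prems by (simp add: take_append)
    moreover have "take r (concat bs @ z) = take r (if bs = [] then z else hd bs)"
    proof (cases bs)
      case Nil then show ?thesis by simp
    next
      case (Cons b2 bs2)
      then have "length b2 = k" using Cons.prems(1) \<open>bs = b2 # bs2\<close> by simp
      then show ?thesis using Cons \<open>r < k\<close> \<open>bs = b2 # bs2\<close> by (simp add: take_append)
    qed
    ultimately show ?thesis using 0 by (cases bs) auto
  next
    case (Suc q')
    have lb: "length b = k" using Cons.prems by simp
    have "drop (q*k+r) (concat (b#bs) @ z) = drop (q'*k+r) (concat bs @ z)"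
      using Suc lb by simp
    then show ?thesis using Cons.IH[of q'] Cons.prems Suc by auto
  qed
qed

lemma bigW_eq:
  assumes "N = n + 1" "i \<le> N^k"
  shows "bigW n k i = concat (map (\<lambda>q. dig N k ((q+i) mod N^k)) [0..<N^k])"
proof -
  let ?M = "N^k"
  have "drop i [0..<?M] @ take i [0..<?M] = map (\<lambda>q. (q+i) mod ?M) [0..<?M]"
  proof (rule nth_equalityI)
    show "length (drop i [0..<?M] @ take i [0..<?M]) = length (map (\<lambda>q. (q+i) mod ?M) [0..<?M])"
      using assms by simp
  next
    fix q assume "q < length (drop i [0..<?M] @ take i [0..<?M])"
    then have q: "q < ?M" using assms by simp
    show "(drop i [0..<?M] @ take i [0..<?M]) ! q = map (\<lambda>q. (q+i) mod ?M) [0..<?M] ! q"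
    proof (cases "q < ?M - i")
      case True then show ?thesis using assms q by (simp add: nth_append)
    next
      case False
      then have "(q+i) mod ?M = q + i - ?M" using q assms
        by (simp add: le_mod_geq)
      then show ?thesis using assms q False by (simp add: nth_append)
    qed
  qed
  note E = this
  let ?g = "dig N k" and ?xs = "[0..<?M]"
  have "drop i (map ?g ?xs) @ take i (map ?g ?xs) = map ?g (drop i ?xs @ take i ?xs)"
    by (simp only: drop_map take_map map_append)
  also have "\<dots> = map ?g (map (\<lambda>q. (q+i) mod ?M) ?xs)" using E by (simp only:)
  also have "\<dots> = map (\<lambda>q. dig N k ((q+i) mod N^k)) ?xs" by simp
  finally show ?thesis unfolding bigW_def lex_words_eq[OF assms(1)] by (simp only:)
qed

lemma arith_key:
  fixes P Q m m' :: nat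
  assumes "P > 0" "Q > 0" "m < P*Q" "m' < P*Q" "m mod P = m' mod P"
    "((m+1) mod (P*Q)) div P = ((m'+1) mod (P*Q)) div P"
  shows "m = m'"
proof -
  have a: "(m+1) mod P = (m'+1) mod P" using assms(5) by (metis mod_Suc_eq Suc_eq_plus1)
  have b: "x mod (P*Q) = P * (x div P mod Q) + x mod P" for x by (rule mod_mult2_eq)
  have c: "(x mod (P*Q)) div P = x div P mod Q" for x
    using b[of x] assms(1) by simp
  have d: "(m+1) div P mod Q = (m'+1) div P mod Q" using c[of "m+1"] c[of "m'+1"] assms(6) by simp
  have e: "(m+1) mod (P*Q) = (m'+1) mod (P*Q)" using b[of "m+1"] b[of "m'+1"] a d by simp
  show ?thesis
  proof (cases "m + 1 = P*Q")
    case True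
    then have "(m'+1) mod (P*Q) = 0" using e by simp
    then have "m' + 1 = P*Q" using assms(4)
      by (metis Suc_eq_plus1 Suc_leI le_neq_implies_less mod_less zero_neq_one add_is_0)
    then show ?thesis using True by simp
  next
    case False
    then have m1: "m + 1 < P*Q" using assms(3) by simp
    show ?thesis
    proof (cases "m' + 1 = P*Q")
      case True
      then show ?thesis using e m1 by simp
    next
      case False
      then have "m' + 1 < P*Q" using assms(4) by simp
      then show ?thesis using e m1 by simp
    qed
  qed
qed

lemma F_inj:
  assumes "N > 0" "r < k"
  shows "inj_on (\<lambda>m. drop r (dig N k m) @ take r (dig N k ((m+1) mod N^k))) {..<N^k}"
proof (rule inj_onI)
  fix m m' assume m: "m \<in> {..<N^k}" and m': "m' \<in> {..<N^k}"
  assume eq: "drop r (dig N k m) @ take r (dig N k ((m+1) mod N^k)) =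
              drop r (dig N k m') @ take r (dig N k ((m'+1) mod N^k))"
  define s where "s = k - r"
  have ks: "k = r + s" using assms s_def by simp
  have sp: "dig N k x = dig N r (x div N^s) @ dig N s x" for x
    using dig_split[OF assms(1), of r s x] ks by simp
  have dr: "drop r (dig N k x) = dig N s x" for x using sp[of x] by simp
  have tr: "take r (dig N k x) = dig N r (x div N^s)" for x using sp[of x] by simp
  have MM: "N^k = N^s * N^r" using ks by (simp add: power_add mult.commute)
  from eq have "dig N s m = dig N s m'" and
    e2: "dig N r (((m+1) mod N^k) div N^s) = dig N r (((m'+1) mod N^k) div N^s)"
    unfolding dr tr by auto
  then have e1: "m mod N^s = m' mod N^s" using dig_eq_iff[OF assms(1)] by blast
  have lt: "((x+1) mod N^k) div N^s < N^r" for x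
  proof -
    have "(x+1) mod N^k < N^s * N^r" using MM assms(1) by simp
    then show ?thesis by (simp add: less_mult_imp_div_less mult.commute)
  qed
  from e2 have "((m+1) mod N^k) div N^s = ((m'+1) mod N^k) div N^s"
    using dig_eq_iff[OF assms(1)] lt[of m] lt[of m'] by simp
  then show "m = m'"
    using arith_key[of "N^s" "N^r" m m'] e1 m m' MM assms(1) by simp
qed

theorem lemma2p1:
  fixes n k i :: nat and c w :: "nat list"
  assumes "n \<ge> 1" and "k \<ge> 1" and "i \<le> n"
    and "c = bigW n k i @ replicate (k - 1) 0"
    and "length w = k" and "set w \<subseteq> {0..n}"
  shows "card {j \<in> {1..k * (n + 1) ^ k}. take k (drop (j - 1) c) = w} = k"
proof -
  define N where "N = n + 1"
  define M where "M = N^k"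
  have N0: "N > 0" using N_def by simp
  have iN: "i < N" using assms(3) N_def by simp
  have NM: "N \<le> M" unfolding M_def using assms(2) N0
    by (intro self_le_power) auto
  have iM: "i < M" using iN NM by simp
  define B where "B q = dig N k ((q+i) mod M)" for q
  define bs where "bs = map B [0..<M]"
  define F where "F r m = drop r (dig N k m) @ take r (dig N k ((m+1) mod M))" for r m
  define A where "A = {xs. length xs = k \<and> set xs \<subseteq> {0..n}}"
  have finA: "finite A" unfolding A_def using finite_lists_length_eq[of "{0..n}" k] by (simp add: conj_commute)
  have cA: "card A = M" unfolding A_def M_def N_def using card_lists_length_eq[of "{0..n}" k] by (simp add: conj_commute)
  have c_eq: "c = concat bs @ replicate (k-1) 0"
    using assms(4) bigW_eq[of N n i k] N_def iM unfolding bs_def B_def M_def by simp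
  define win where "win q r = take k (drop (q*k+r) c)" for q r
  have win_eq: "win q r = F r ((q+i) mod M)" if q: "q < M" and r: "r < k" for q r
  proof -
    have lens: "\<forall>x\<in>set bs. length x = k" unfolding bs_def B_def by simp
    have "win q r = drop r (bs!q) @ take r (if Suc q < length bs then bs!Suc q else replicate (k-1) 0)"
      unfolding win_def c_eq using window[OF lens, of q r "replicate (k-1) 0"] q r by (simp add: bs_def)
    also have "\<dots> = F r ((q+i) mod M)"
    proof (cases "Suc q < M")
      case True
      have "(Suc q + i) mod M = ((q+i) mod M + 1) mod M" by (simp add: mod_Suc_eq)
      then show ?thesis using True q unfolding bs_def B_def F_def by simp
    next
      case False
      then have qM: "Suc q = M" using q by simp
      have "((q+i) mod M + 1) mod M = (q+i+1) mod M" by (simp add: mod_Suc_eq)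
      also have "q+i+1 = i + M" using qM by simp
      also have "(i + M) mod M = i" using iM by simp
      finally have "((q+i) mod M + 1) mod M = i" .
      moreover have "take r (dig N k i) = replicate r 0"
        using dig_small[OF N0 iN, of "k-1"] assms(2) r by (simp add: take_append)
      moreover have "take r (replicate (k-1) 0) = replicate r (0::nat)" using r by simp
      ultimately show ?thesis using qM q unfolding bs_def B_def F_def by simp
    qed
    finally show ?thesis .
  qed
  have one: "card {q. q < M \<and> win q r = w} = 1" if r: "r < k" for r
  proof -
    let ?h = "\<lambda>q. F r ((q+i) mod M)"
    have inj1: "inj_on (\<lambda>q. (q+i) mod M) {..<M}"
    proof (rule inj_onI)
      fix x y assume xy: "x \<in> {..<M}" "y \<in> {..<M}" "(x+i) mod M = (y+i) mod M"
      have f: "(z+i) mod M = (if z+i < M then z+i else z+i-M)" if "z < M" for z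
        using that iM by (auto simp: le_mod_geq)
      show "x = y" using f[of x] f[of y] xy by (auto split: if_splits)
    qed
    have im: "(\<lambda>q. (q+i) mod M) ` {..<M} \<subseteq> {..<M}" using N0 unfolding M_def by auto
    have "inj_on (F r) {..<M}" using F_inj[OF N0 r] unfolding F_def M_def .
    then have "inj_on (F r \<circ> (\<lambda>q. (q+i) mod M)) {..<M}"
      using comp_inj_on[OF inj1] inj_on_subset[OF _ im] by blast
    then have inj: "inj_on ?h {..<M}" by (simp add: comp_def)
    have sub: "?h ` {..<M} \<subseteq> A"
    proof
      fix x assume "x \<in> ?h ` {..<M}"
      then obtain m where x: "x = F r m" by auto
      have "set (dig N k y) \<subseteq> {0..n}" for y using dig_set[OF N0, of k y] N_def by auto
      then have "set x \<subseteq> {0..n}" unfolding x F_def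
        by (auto dest: in_set_dropD in_set_takeD)
      moreover have "length x = k" unfolding x F_def using r by simp
      ultimately show "x \<in> A" unfolding A_def by simp
    qed
    have "card (?h ` {..<M}) = M" using card_image[OF inj] by simp
    then have "?h ` {..<M} = A" using card_subset_eq[OF finA sub] cA by simp
    moreover have "w \<in> A" unfolding A_def using assms by simp
    ultimately obtain q0 where q0: "q0 < M" "?h q0 = w" by auto
    have "{q. q < M \<and> win q r = w} = {q0}"
    proof
      show "{q0} \<subseteq> {q. q < M \<and> win q r = w}" using q0 win_eq[OF q0(1) r] by simp
      show "{q. q < M \<and> win q r = w} \<subseteq> {q0}"
      proof
        fix q assume "q \<in> {q. q < M \<and> win q r = w}"
        then have "q < M" "?h q = w" using win_eq r by auto
        then show "q \<in> {q0}" using inj q0 by (auto dest: inj_onD)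
      qed
    qed
    then show ?thesis by simp
  qed
  let ?T = "SIGMA r:{..<k}. {q. q < M \<and> win q r = w}"
  have cT: "card ?T = k"
    using one by (subst card_SigmaI) auto
  have SI: "{j \<in> {1..k * (n + 1) ^ k}. take k (drop (j - 1) c) = w} = (\<lambda>(r,q). q*k+r+1) ` ?T"
  proof
    show "{j \<in> {1..k * (n + 1) ^ k}. take k (drop (j - 1) c) = w} \<subseteq> (\<lambda>(r,q). q*k+r+1) ` ?T"
    proof
      fix j assume j: "j \<in> {j \<in> {1..k * (n + 1) ^ k}. take k (drop (j - 1) c) = w}"
      define q where "q = (j-1) div k"
      define r where "r = (j-1) mod k"
      have jq: "j = q*k+r+1" using j unfolding q_def r_def by simp
      have r: "r < k" using assms(2) r_def by simp
      have "j \<le> M * k" "j \<ge> 1" using j unfolding M_def N_def by (simp_all add: mult.commute)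
      then have "j - 1 < M * k" by linarith
      then have q: "q < M" unfolding q_def by (simp add: less_mult_imp_div_less)
      have "win q r = w" using j jq unfolding win_def by simp
      then show "j \<in> (\<lambda>(r,q). q*k+r+1) ` ?T" using jq q r by (intro image_eqI[of _ _ "(r,q)"]) auto
    qed
    show "(\<lambda>(r,q). q*k+r+1) ` ?T \<subseteq> {j \<in> {1..k * (n + 1) ^ k}. take k (drop (j - 1) c) = w}"
    proof
      fix j assume "j \<in> (\<lambda>(r,q). q*k+r+1) ` ?T"
      then obtain r q where rq: "r < k" "q < M" "win q r = w" "j = q*k+r+1" by auto
      have "q*k + r < q*k + k" using rq by simp
      also have "\<dots> = (q+1)*k" by simp
      also have "\<dots> \<le> M*k" using rq by (intro mult_right_mono) auto
      finally have "j \<le> k * (n+1)^k" using rq unfolding M_def N_def by (simp add: mult.commute)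
      then show "j \<in> {j \<in> {1..k * (n + 1) ^ k}. take k (drop (j - 1) c) = w}"
        using rq unfolding win_def by simp
    qed
  qed
  have "inj_on (\<lambda>(r,q). q*k+r+1) ?T"
  proof (rule inj_onI)
    fix x y assume "x \<in> ?T" "y \<in> ?T" "(\<lambda>(r,q). q*k+r+1) x = (\<lambda>(r,q). q*k+r+1) y"
    then obtain r q r' q' where x: "x = (r,q)" "y = (r',q')" "r < k" "r' < k" "q*k+r = q'*k+r'" by auto
    have r1: "(q*k+r) mod k = r" using x(3) by simp
    have r2: "(q'*k+r') mod k = r'" using x(4) by simp
    have "r = r'" using r1 r2 x(5) by metis
    moreover then have "q = q'" using x assms(2) by simp
    ultimately show "x = y" using x by simp
  qed
  then have "card ((\<lambda>(r,q). q*k+r+1) ` ?T) = card ?T" by (rule card_image)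
  then show ?thesis using SI cT by simp
qed
end
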